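(* Let $P$ be a finite set of points in the plane and let $G(P,S)$ be an increasing-chord geometric graph with vertex set $P$ and edge set $S$. Then every edge of the Gabriel graph of $P$ belongs to $S$.
   Context: The Gabriel graph of a point set $P$ is the geometric graph with vertex set $P$ having an edge $\overline{pq}$ between $p,q\in P$ if and only if the closed disk with diameter $\overline{pq}$ contains no point of $P\setminus\{p,q\}$ in its interior or on its boundary. A geometric path $(v_1,\dots,v_k)$ is self-approaching from $v_1$ to $v_k$ if for every three distinct points $a,b,c$ appearing in this order along the path (possibly interior to edges) $|\overline{bc}|<|\overline{ac}|$, where $|\cdot|$ is Euclidean length. A geometric graph (point set plus straight-line edges) is increasing-chord if for every pair of vertices $u,v$ it contains a path between them that is self-approaching both from $u$ to $v$ and from $v$ to $u$. *)

theory Defs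
  imports "HOL-Analysis.Analysis"
begin

type_synonym point = "real^2"

definition gabriel_edge :: "point set \<Rightarrow> point \<Rightarrow> point \<Rightarrow> bool" where
  "gabriel_edge P p q \<longleftrightarrow> p \<in> P \<and> q \<in> P \<and> p \<noteq> q \<and>
     (\<forall>r \<in> P - {p, q}. r \<notin> cball (midpoint p q) (dist p q / 2))"

fun polypath :: "point list \<Rightarrow> real \<Rightarrow> point" where
  "polypath [] = linepath 0 0"
| "polypath [v] = linepath v v"
| "polypath (v # w # rest) = linepath v w +++ polypath (w # rest)"

definition self_approaching :: "point list \<Rightarrow> bool" where
  "self_approaching vs \<longleftrightarrow>
     (\<forall>s1 s2 s3. 0 \<le> s1 \<and> s1 < s2 \<and> s2 < s3 \<and> s3 \<le> 1 \<longrightarrow>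
        (let a = polypath vs s1; b = polypath vs s2; c = polypath vs s3 in
          a \<noteq> b \<and> b \<noteq> c \<and> a \<noteq> c \<longrightarrow> dist b c < dist a c))"

definition graph_path :: "point set set \<Rightarrow> point list \<Rightarrow> point \<Rightarrow> point \<Rightarrow> bool" where
  "graph_path S vs u v \<longleftrightarrow> vs \<noteq> [] \<and> hd vs = u \<and> last vs = v \<and>
     (\<forall>i. Suc i < length vs \<longrightarrow> {vs ! i, vs ! Suc i} \<in> S)"

definition geometric_graph :: "point set \<Rightarrow> point set set \<Rightarrow> bool" where
  "geometric_graph P S \<longleftrightarrow> (\<forall>e \<in> S. e \<subseteq> P \<and> card e = 2)"

definition increasing_chord :: "point set \<Rightarrow> point set set \<Rightarrow> bool" where
  "increasing_chord P S \<longleftrightarrow>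
     (\<forall>u \<in> P. \<forall>v \<in> P. \<exists>vs. graph_path S vs u v \<and>
        self_approaching vs \<and> self_approaching (rev vs))"

end

theory Submission
  imports Defs
begin

lemma polypath_1: "vs \<noteq> [] \<Longrightarrow> polypath vs 1 = last vs"
  by (induction vs rule: polypath.induct) (auto simp: joinpaths_def linepath_def)

lemma polypath_first: "t \<le> 1/2 \<Longrightarrow> polypath (x # y # zs) t = linepath x y (2*t)"
  by (simp add: joinpaths_def)

lemma sq_aux: "(norm ((x::real^2) + y))^2 \<le> (norm (y - x))^2 \<longleftrightarrow> x \<bullet> y \<le> 0"
  by (simp add: power2_norm_eq_inner inner_add_left inner_add_right inner_diff_left inner_diff_right inner_commute)

lemma sq_aux2: "(norm ((x::real^2) - u *\<^sub>R y))^2 = x \<bullet> x - 2*u*(x \<bullet> y) + u^2 * (y \<bullet> y)"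
  by (simp only: power2_norm_eq_inner) (simp add: inner_diff_left inner_diff_right inner_commute power2_eq_square algebra_simps)

lemma cball_mid: "(r::real^2) \<in> cball (midpoint p q) (dist p q / 2) \<longleftrightarrow> (r - p) \<bullet> (r - q) \<le> 0"
proof -
  have e: "r - midpoint p q = (1/2) *\<^sub>R ((r - p) + (r - q))"
    by (simp add: midpoint_def scaleR_add_right scaleR_diff_right scaleR_2[symmetric] del: scaleR_2)
  have "dist r (midpoint p q) = norm ((1/2) *\<^sub>R ((r - p) + (r - q)))"
    by (simp only: dist_norm e)
  moreover have "dist p q = norm ((r - q) - (r - p))" by (simp add: dist_norm norm_minus_commute)
  ultimately have "r \<in> cball (midpoint p q) (dist p q / 2) \<longleftrightarrow>
      norm ((r - p) + (r - q)) \<le> norm ((r - q) - (r - p))"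
    by (simp add: dist_commute)
  also have "\<dots> \<longleftrightarrow> (norm ((r - p) + (r - q)))^2 \<le> (norm ((r - q) - (r - p)))^2"
    by (simp add: power_mono_iff)
  also have "\<dots> \<longleftrightarrow> (r - p) \<bullet> (r - q) \<le> 0"
    by (rule sq_aux)
  finally show ?thesis .
qed

theorem lemma2:
  fixes P :: "(real^2) set" and S :: "(real^2) set set"
  assumes "finite P"
    and "geometric_graph P S"
    and "increasing_chord P S"
    and "gabriel_edge P p q"
  shows "{p, q} \<in> S"
proof -
  have pP: "p \<in> P" and qP: "q \<in> P" and pq: "p \<noteq> q"
    and gab: "\<forall>r \<in> P - {p, q}. r \<notin> cball (midpoint p q) (dist p q / 2)"
    using assms(4) unfolding gabriel_edge_def by auto
  obtain vs where gp: "graph_path S vs p q" and sa: "self_approaching vs"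
    using assms(3) pP qP unfolding increasing_chord_def by blast
  have ne: "vs \<noteq> []" and hd: "hd vs = p" and lst: "last vs = q"
    and edges: "\<And>i. Suc i < length vs \<Longrightarrow> {vs ! i, vs ! Suc i} \<in> S"
    using gp unfolding graph_path_def by auto
  obtain r rest where vs: "vs = p # r # rest"
  proof (cases vs)
    case Nil thus ?thesis using ne by simp
  next
    case (Cons a t)
    show ?thesis
    proof (cases t)
      case Nil thus ?thesis using Cons hd lst pq by simp
    next
      case (Cons b t') thus ?thesis using \<open>vs = a # t\<close> hd that by simp
    qed
  qed
  have eS: "{p, r} \<in> S" using edges[of 0] vs by simp
  hence "{p, r} \<subseteq> P" "card {p, r} = 2" using assms(2) unfolding geometric_graph_def by auto
  hence rP: "r \<in> P" and pr: "p \<noteq> r" by auto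
  show ?thesis
  proof (cases "r = q")
    case True thus ?thesis using eS by simp
  next
    case rq: False
    have "r \<notin> cball (midpoint p q) (dist p q / 2)" using gab rP rq pr by auto
    hence "\<not> ((r - p) \<bullet> (r - q) \<le> 0)" using cball_mid by blast
    hence Dpos: "(r - p) \<bullet> (r - q) > 0" by linarith
    define D where "D = (r - p) \<bullet> (r - q)"
    define L where "L = (r - p) \<bullet> (r - p)"
    define F where "F = (r - q) \<bullet> (r - q)"
    have Lpos: "L > 0" using pr unfolding L_def by simp
    have Fpos: "F > 0" using rq unfolding F_def by simp
    have D0: "D > 0" using Dpos D_def by simp
    define u where "u = min (1/2) (min (D / L) (F / (4*D)))"
    have u0: "u > 0" using D0 Lpos Fpos unfolding u_def by simp
    have u1: "u \<le> 1/2" unfolding u_def by (rule min.cobounded1)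
    have "u \<le> D / L" unfolding u_def by simp
    hence uL: "u * L \<le> D" using Lpos by (simp add: pos_le_divide_eq)
    have "u \<le> F / (4*D)" unfolding u_def by simp
    hence uD: "u * D \<le> F / 4" using D0 by (simp add: pos_le_divide_eq)
    define a where "a = u *\<^sub>R p + (1 - u) *\<^sub>R r"
    have aq: "a - q = (r - q) - u *\<^sub>R (r - p)" unfolding a_def by (simp add: algebra_simps)
    have na: "norm (a - q)^2 = F - 2*u*D + u^2 * L"
      unfolding aq F_def D_def L_def sq_aux2 by (simp add: inner_commute)
    have "u^2 * L \<le> u * D" using uL u0 by (simp add: power2_eq_square mult.assoc mult_left_mono)
    moreover have "u * D > 0" using u0 D0 by simp
    ultimately have lt: "norm (a - q)^2 < F" using na by linarith
    have "u^2 * L \<ge> 0" using Lpos by simp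
    hence gt: "norm (a - q)^2 > 0" using na uD Fpos by linarith
    have nrq: "norm (r - q)^2 = F" unfolding F_def by (simp add: power2_norm_eq_inner)
    define s1 where "s1 = (1 - u) / 2"
    have s1: "0 \<le> s1" "s1 < 1/2" using u0 u1 unfolding s1_def by auto
    have "polypath vs s1 = linepath p r (2 * s1)" unfolding vs
      by (rule polypath_first) (use s1 in linarith)
    moreover have "2 * s1 = 1 - u" "1 - (1 - u) = u" unfolding s1_def by simp_all
    ultimately have A: "polypath vs s1 = a" by (simp only: linepath_def a_def)
    have B: "polypath vs (1/2) = r" unfolding vs by (simp add: joinpaths_def linepath_def)
    have C: "polypath vs 1 = q" using polypath_1[OF ne] lst by simp
    have "a \<noteq> r"
    proof
      assume "a = r" hence "u *\<^sub>R (p - r) = 0" unfolding a_def by (simp add: algebra_simps)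
      thus False using u0 pr by simp
    qed
    moreover have "a \<noteq> q" using gt by auto
    moreover have "0 \<le> s1 \<and> s1 < 1/2 \<and> 1/2 < (1::real) \<and> (1::real) \<le> 1 \<longrightarrow>
        (polypath vs s1 \<noteq> polypath vs (1/2) \<and> polypath vs (1/2) \<noteq> polypath vs 1 \<and> polypath vs s1 \<noteq> polypath vs 1
         \<longrightarrow> dist (polypath vs (1/2)) (polypath vs 1) < dist (polypath vs s1) (polypath vs 1))"
      using sa unfolding self_approaching_def Let_def by blast
    ultimately have "dist r q < dist a q"
      using s1 A B C rq by simp
    hence "norm (r - q) < norm (a - q)" by (simp add: dist_norm)
    hence "norm (r - q)^2 < norm (a - q)^2" by (simp add: power_strict_mono)
    thus ?thesis using lt nrq by simp
  qed
qed

end
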